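(* Let $\alpha\in(0,1)$ be irrational and let $w\in W_\alpha$. Then there exist $t\in\mathbb{N}$, a (possibly empty) suffix $x$ of $s_t$ or of $s_{t-1}$, and a (possibly empty) prefix $y$ of $s_{t+1}$ such that $w=xy$.
   Context: Let $\alpha=[a_1,a_2,\dots]$ be the continued fraction expansion of $\alpha$. Define words over $\{0,1\}$ by $s_{-1}=1$, $s_0=0$, $s_1=s_0^{a_1-1}s_{-1}$, $s_n=s_{n-1}^{a_n}s_{n-2}$ for $n\ge2$. For $\theta\in[0,1)$, $v_{\alpha,\theta}$ is the two-sided infinite word with letters $v_{\alpha,\theta}(n)=\chi_{[1-\alpha,1)}(n\alpha+\theta\bmod1)$, $n\in\mathbb{Z}$; $W_\alpha$ is the set of all finite non-empty subwords of the words $v_{\alpha,\theta}$, $\theta\in[0,1)$. $\mathbb{N}=\{1,2,\dots\}$. *)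

theory Defs
  imports Complex_Main "HOL-Library.Sublist"
begin

text \<open>Continued fraction expansion of \<alpha> \<in> (0,1): \<alpha> = [0; a_1, a_2, ...] = 1/(a_1 + 1/(a_2 + ...)).
  cf_rem \<alpha> n is the n-th iterate of the Gauss map, cf_rem \<alpha> 0 = \<alpha>;
  cf_pq \<alpha> k = a_k (k \<ge> 1).\<close>
fun cf_rem :: "real \<Rightarrow> nat \<Rightarrow> real" where
  "cf_rem \<alpha> 0 = \<alpha>"
| "cf_rem \<alpha> (Suc n) = frac (1 / cf_rem \<alpha> n)"

definition cf_pq :: "real \<Rightarrow> nat \<Rightarrow> nat" where
  "cf_pq \<alpha> k = nat \<lfloor>1 / cf_rem \<alpha> (k - 1)\<rfloor>"

text \<open>Standard words, index-shifted: sw \<alpha> (k+1) = s_k for k \<ge> -1.\<close>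
fun sw :: "real \<Rightarrow> nat \<Rightarrow> nat list" where
  "sw \<alpha> 0 = [1]"
| "sw \<alpha> (Suc 0) = [0]"
| "sw \<alpha> (Suc (Suc 0)) = concat (replicate (cf_pq \<alpha> 1 - 1) [0]) @ [1]"
| "sw \<alpha> (Suc (Suc (Suc n))) =
     concat (replicate (cf_pq \<alpha> (n + 2)) (sw \<alpha> (Suc (Suc n)))) @ sw \<alpha> (Suc n)"

definition sturm :: "real \<Rightarrow> real \<Rightarrow> int \<Rightarrow> nat" where
  "sturm \<alpha> \<theta> n = (if frac (of_int n * \<alpha> + \<theta>) \<in> {1 - \<alpha>..<1} then 1 else 0)"

definition Wset :: "real \<Rightarrow> nat list set" where
  "Wset \<alpha> = {w. w \<noteq> [] \<and> (\<exists>\<theta> m. 0 \<le> \<theta> \<and> \<theta> < 1 \<and>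
        w = map (\<lambda>i. sturm \<alpha> \<theta> (m + int i)) [0..<length w])}"

end

theory Submission
  imports Defs "HOL-Analysis.Kronecker_Approximation_Theorem"
begin


definition good :: "real \<Rightarrow> nat list \<Rightarrow> bool" where
  "good \<alpha> w \<longleftrightarrow> (\<exists>t::nat. t \<ge> 1 \<and> (\<exists>x y. (suffix x (sw \<alpha> (t + 1)) \<or> suffix x (sw \<alpha> t))
           \<and> prefix y (sw \<alpha> (t + 2)) \<and> w = x @ y))"

lemma concat_replicate_single: "concat (replicate n [x]) = replicate n x"
  by (induction n) auto

lemma factor_pow:
  assumes "prefix v u"
  shows "sublist w (concat (replicate k u) @ v) \<Longrightarrow> sublist w u \<or> sublist w v \<or>
     (\<exists>x y. w = x @ y \<and> suffix x u \<and> prefix y (concat (replicate k u) @ v))"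
proof (induction k)
  case 0
  then show ?case by simp
next
  case (Suc k)
  have pre: "prefix (concat (replicate k u) @ v) (concat (replicate (Suc k) u) @ v)"
  proof -
    have "concat (replicate (Suc k) u) = concat (replicate k u) @ u"
      by (simp add: replicate_append_same[symmetric])
    moreover have "prefix v (u @ v)" using assms prefix_prefix by blast
    ultimately show ?thesis by simp
  qed
  have eq: "concat (replicate (Suc k) u) @ v = u @ (concat (replicate k u) @ v)" by simp
  from Suc.prems[unfolded eq] have
    "sublist w u \<or> sublist w (concat (replicate k u) @ v) \<or>
     (\<exists>x y. w = x @ y \<and> suffix x u \<and> prefix y (concat (replicate k u) @ v))"
    by (simp only: sublist_append)
  then show ?case
  proof (elim disjE exE conjE)
    assume "sublist w (concat (replicate k u) @ v)"
    from Suc.IH[OF this] show ?case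
    proof (elim disjE exE conjE)
      fix x y assume "w = x @ y" "suffix x u" "prefix y (concat (replicate k u) @ v)"
      then show ?case using prefix_order.trans[OF _ pre] by blast
    qed simp_all
  next
    fix x y assume "w = x @ y" "suffix x u" "prefix y (concat (replicate k u) @ v)"
    then show ?case using prefix_order.trans[OF _ pre] by blast
  qed simp
qed

lemma sublist_replicate: "sublist w (replicate k c) \<Longrightarrow> \<exists>j. w = replicate j c \<and> j \<le> k"
proof -
  assume h: "sublist w (replicate k c)"
  have "\<forall>y\<in>set w. y = c" using set_mono_sublist[OF h] by auto
  then have "replicate (length w) c = w"
    by (rule replicate_length_same)
  moreover have "length w \<le> k" using sublist_length_le[OF h] by simp
  ultimately show ?thesis by (intro exI[of _ "length w"]) simp
qed

lemma prefix_replicate_le: "j \<le> k \<Longrightarrow> prefix (replicate j c) (replicate k c @ z)"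
proof -
  assume "j \<le> k"
  then have "replicate k c @ z = replicate j c @ (replicate (k - j) c @ z)"
    by (simp add: replicate_add[symmetric])
  then show ?thesis unfolding prefix_def by blast
qed

lemma factor_rep:
  assumes "sublist w (replicate k c @ [d])"
  shows "prefix w (replicate k c @ [d]) \<or> suffix w (replicate k c @ [d])"
proof -
  from assms have "sublist w (replicate k c) \<or> sublist w [d] \<or>
     (\<exists>x y. w = x @ y \<and> suffix x (replicate k c) \<and> prefix y [d])"
    by (simp only: sublist_append)
  then show ?thesis
  proof (elim disjE exE conjE)
    assume "sublist w (replicate k c)"
    from sublist_replicate[OF this] obtain j where "w = replicate j c" "j \<le> k" by blast
    then have "prefix w (replicate k c @ [d])" using prefix_replicate_le[of j k c "[d]"] by simp
    then show ?thesis by blast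
  next
    assume "sublist w [d]"
    then have "prefix w [d] \<or> sublist w []" by (simp only: sublist_Cons_right)
    then have "w = [] \<or> w = [d]" by (cases w) (auto simp: prefix_Cons)
    then show ?thesis by (auto simp: suffix_def)
  next
    fix x y assume h: "w = x @ y" "suffix x (replicate k c)" "prefix y [d]"
    from h(3) have "y = [] \<or> y = [d]" by (cases y) (auto simp: prefix_Cons)
    then show ?thesis
    proof
      assume "y = []"
      have "sublist x (replicate k c)" using h(2) by blast
      from sublist_replicate[OF this] obtain j where "x = replicate j c" "j \<le> k" by blast
      then have "prefix x (replicate k c @ [d])" using prefix_replicate_le[of j k c "[d]"] by simp
      then show ?thesis using \<open>y = []\<close> h(1) by simp
    next
      assume "y = [d]"
      then have "w = x @ [d]" using h(1) by simp
      moreover obtain p where "replicate k c = p @ x" using h(2) unfolding suffix_def by blast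
      ultimately have "replicate k c @ [d] = p @ w" by simp
      then show ?thesis unfolding suffix_def by blast
    qed
  qed
qed


lemma frac_irr: "x \<notin> \<rat> \<Longrightarrow> 0 < frac x \<and> frac x < 1 \<and> frac x \<notin> \<rat>"
proof -
  assume x: "x \<notin> \<rat>"
  have "x \<notin> \<int>" using x Ints_subset_Rats by blast
  then have "frac x \<noteq> 0" by simp
  moreover have "frac x \<notin> \<rat>"
  proof
    assume "frac x \<in> \<rat>"
    then have "frac x + of_int \<lfloor>x\<rfloor> \<in> \<rat>" by (simp add: Rats_add)
    then show False using x by (simp add: frac_def)
  qed
  ultimately show ?thesis using frac_ge_0[of x] frac_lt_1[of x] by linarith
qed

lemma inv_irr: "(x::real) \<notin> \<rat> \<Longrightarrow> 1 / x \<notin> \<rat>"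
proof
  assume x: "x \<notin> \<rat>" and h: "1 / x \<in> \<rat>"
  have "1 / (1 / x) \<in> \<rat>" by (rule Rats_divide[OF Rats_1 h])
  moreover have "1 / (1 / x) = x" by simp
  ultimately show False using x by simp
qed

lemma cf_rem_props:
  assumes "0 < \<alpha>" "\<alpha> < 1" "\<alpha> \<notin> \<rat>"
  shows "0 < cf_rem \<alpha> n \<and> cf_rem \<alpha> n < 1 \<and> cf_rem \<alpha> n \<notin> \<rat>"
proof (induction n)
  case 0
  then show ?case using assms by simp
next
  case (Suc n)
  then show ?case using frac_irr[OF inv_irr[of "cf_rem \<alpha> n"]] by simp
qed

lemma cf_pq_pos:
  assumes "0 < \<alpha>" "\<alpha> < 1" "\<alpha> \<notin> \<rat>"
  shows "cf_pq \<alpha> (Suc k) \<ge> 1"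
proof -
  let ?r = "cf_rem \<alpha> k"
  have r: "0 < ?r" "?r < 1" using cf_rem_props[OF assms] by auto
  then have "1 / ?r > 1" by simp
  then have "\<lfloor>1 / ?r\<rfloor> \<ge> 1" by (simp add: le_floor_iff)
  then have "nat \<lfloor>1 / ?r\<rfloor> \<ge> nat 1" by (rule nat_mono)
  then show ?thesis unfolding cf_pq_def by simp
qed

lemma sw_nonempty: "sw \<alpha> n \<noteq> []"
  by (induction \<alpha> n rule: sw.induct) auto

lemma sw2: "sw \<alpha> (Suc (Suc 0)) = replicate (cf_pq \<alpha> 1 - 1) 0 @ [1]"
  by (simp add: concat_replicate_single)

lemma sw3: "sw \<alpha> (Suc (Suc (Suc 0))) = concat (replicate (cf_pq \<alpha> 2) (sw \<alpha> (Suc (Suc 0)))) @ [0]"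
proof -
  have "sw \<alpha> (Suc (Suc (Suc 0))) = concat (replicate (cf_pq \<alpha> (0 + 2)) (sw \<alpha> (Suc (Suc 0)))) @ sw \<alpha> (Suc 0)"
    by (rule sw.simps(4))
  then show ?thesis by (simp add: numeral_2_eq_2)
qed

lemma prefix_concat_rep: "k \<ge> 1 \<Longrightarrow> prefix u (concat (replicate k u) @ z)"
  by (cases k) auto

lemma sublist_single: "sublist w [e] \<Longrightarrow> w \<noteq> [] \<Longrightarrow> w = [e]"
proof -
  assume h: "sublist w [e]" "w \<noteq> []"
  have "length w \<le> 1" using sublist_length_le[OF h(1)] by simp
  with h(2) obtain a where a: "w = [a]" by (cases w) auto
  have "set w \<subseteq> {e}" using set_mono_sublist[OF h(1)] by simp
  with a show ?thesis by simp
qed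

lemma goodI:
  assumes "t \<ge> 1" "suffix x (sw \<alpha> (Suc t)) \<or> suffix x (sw \<alpha> t)"
    "prefix y (sw \<alpha> (Suc (Suc t)))" "w = x @ y"
  shows "good \<alpha> w"
  unfolding good_def using assms by (intro exI[of _ t]) auto

lemma main_comb:
  assumes "0 < \<alpha>" "\<alpha> < 1" "\<alpha> \<notin> \<rat>"
  shows "w \<noteq> [] \<Longrightarrow> sublist w (sw \<alpha> N) \<Longrightarrow> good \<alpha> w"
proof (induction N arbitrary: w rule: less_induct)
  case (less N)
  have a2: "cf_pq \<alpha> 2 \<ge> 1" using cf_pq_pos[OF assms, of 1] by (simp add: numeral_2_eq_2)
  have p23: "prefix (sw \<alpha> (Suc (Suc 0))) (sw \<alpha> (Suc (Suc (Suc 0))))"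
    using prefix_concat_rep[OF a2, of "sw \<alpha> (Suc (Suc 0))" "[0]"]
    by (simp only: sw3)
  have "N = 0 \<or> N = Suc 0 \<or> N = Suc (Suc 0) \<or> N = Suc (Suc (Suc 0)) \<or> (\<exists>n. N = Suc (Suc (Suc (Suc n))))"
    by presburger
  then show ?case
  proof (elim disjE exE)
    assume N: "N = 0"
    then have "w = [1]" using less.prems sublist_single by simp
    moreover have "suffix [1] (sw \<alpha> (Suc 1))" by (simp add: sw2 suffix_def)
    ultimately show ?thesis by (intro goodI[of "Suc 0" "[1]" \<alpha> "[]"]) auto
  next
    assume N: "N = Suc 0"
    then have "w = [0]" using less.prems sublist_single by simp
    moreover have "suffix [0] (sw \<alpha> 1)" by simp
    ultimately show ?thesis by (intro goodI[of "Suc 0" "[0]" \<alpha> "[]"]) auto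
  next
    assume N: "N = Suc (Suc 0)"
    then have "sublist w (replicate (cf_pq \<alpha> 1 - 1) 0 @ [1])" using less.prems sw2 by simp
    then have "prefix w (sw \<alpha> (Suc (Suc 0))) \<or> suffix w (sw \<alpha> (Suc (Suc 0)))"
      using factor_rep sw2 by metis
    then show ?thesis
    proof
      assume "prefix w (sw \<alpha> (Suc (Suc 0)))"
      then have "prefix w (sw \<alpha> (Suc (Suc (Suc 0))))" using prefix_order.trans[OF _ p23] by blast
      then show ?thesis by (intro goodI[of "Suc 0" "[]" \<alpha> w]) auto
    next
      assume "suffix w (sw \<alpha> (Suc (Suc 0)))"
      then show ?thesis by (intro goodI[of "Suc 0" w \<alpha> "[]"]) auto
    qed
  next
    assume N: "N = Suc (Suc (Suc 0))"
    have sw3: "sw \<alpha> N = concat (replicate (cf_pq \<alpha> 2) (sw \<alpha> (Suc (Suc 0)))) @ sw \<alpha> (Suc 0)"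
      unfolding N sw3 by simp
    show ?thesis
    proof (cases "cf_pq \<alpha> 1 \<ge> 2")
      case True
      then have "prefix (sw \<alpha> (Suc 0)) (sw \<alpha> (Suc (Suc 0)))"
        unfolding sw2 by (cases "cf_pq \<alpha> 1 - 1") auto
      from factor_pow[OF this, of w "cf_pq \<alpha> 2"] less.prems(2) sw3
      have "sublist w (sw \<alpha> (Suc (Suc 0))) \<or> sublist w (sw \<alpha> (Suc 0)) \<or>
        (\<exists>x y. w = x @ y \<and> suffix x (sw \<alpha> (Suc (Suc 0))) \<and> prefix y (sw \<alpha> N))" by simp
      then show ?thesis
      proof (elim disjE exE conjE)
        assume "sublist w (sw \<alpha> (Suc (Suc 0)))"
        then show ?thesis using less.IH[of "Suc (Suc 0)"] less.prems N by simp
      next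
        assume "sublist w (sw \<alpha> (Suc 0))"
        then show ?thesis using less.IH[of "Suc 0"] less.prems N by simp
      next
        fix x y assume "w = x @ y" "suffix x (sw \<alpha> (Suc (Suc 0)))" "prefix y (sw \<alpha> N)"
        then show ?thesis using N by (intro goodI[of "Suc 0" x \<alpha> y]) auto
      qed
    next
      case False
      then have "cf_pq \<alpha> 1 - 1 = 0" by simp
      then have s2: "sw \<alpha> (Suc (Suc 0)) = [1]" by (simp add: sw2)
      have s3: "sw \<alpha> N = replicate (cf_pq \<alpha> 2) 1 @ [0]"
        using sw3 s2 by (simp add: concat_replicate_single)
      have "prefix w (sw \<alpha> N) \<or> suffix w (sw \<alpha> N)"
        using factor_rep[of w "cf_pq \<alpha> 2" 1 0] less.prems(2) s3 by simp
      then show ?thesis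
      proof
        assume "prefix w (sw \<alpha> N)"
        then show ?thesis using N by (intro goodI[of "Suc 0" "[]" \<alpha> w]) auto
      next
        assume "suffix w (sw \<alpha> N)"
        then show ?thesis using N by (intro goodI[of 2 w \<alpha> "[]"]) (auto simp: numeral_2_eq_2)
      qed
    qed
  next
    fix n assume N: "N = Suc (Suc (Suc (Suc n)))"
    let ?u = "sw \<alpha> (Suc (Suc (Suc n)))" and ?v = "sw \<alpha> (Suc (Suc n))"
    have swN: "sw \<alpha> N = concat (replicate (cf_pq \<alpha> (Suc n + 2)) ?u) @ ?v"
      unfolding N by (rule sw.simps(4))
    have "cf_pq \<alpha> (n + 2) \<ge> 1" using cf_pq_pos[OF assms, of "Suc n"] by simp
    then have pvu: "prefix ?v ?u" unfolding sw.simps(4) by (rule prefix_concat_rep)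
    from factor_pow[OF pvu, of w "cf_pq \<alpha> (Suc n + 2)"] less.prems(2) swN
    have "sublist w ?u \<or> sublist w ?v \<or>
        (\<exists>x y. w = x @ y \<and> suffix x ?u \<and> prefix y (sw \<alpha> N))" by simp
    then show ?thesis
    proof (elim disjE exE conjE)
      assume "sublist w ?u"
      then show ?thesis using less.IH[of "Suc (Suc (Suc n))"] less.prems N by simp
    next
      assume "sublist w ?v"
      then show ?thesis using less.IH[of "Suc (Suc n)"] less.prems N by simp
    next
      fix x y assume "w = x @ y" "suffix x ?u" "prefix y (sw \<alpha> N)"
      then show ?thesis using N by (intro goodI[of "Suc (Suc n)" x \<alpha> y]) auto
    qed
  qed
qed


definition blk :: "nat \<Rightarrow> nat \<Rightarrow> nat list" where
  "blk a x = replicate (a - 1) 0 @ [1] @ (if x = 0 then [] else [0])"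

definition Gm :: "nat \<Rightarrow> nat list \<Rightarrow> nat list" where
  "Gm a xs = concat (map (blk a) xs)"

lemma Gm_append[simp]: "Gm a (xs @ ys) = Gm a xs @ Gm a ys"
  by (simp add: Gm_def)

lemma Gm_concat_rep[simp]: "Gm a (concat (replicate k xs)) = concat (replicate k (Gm a xs))"
  by (induction k) (auto simp: Gm_def)

lemma Gm_replicate: "Gm a (replicate k x) = concat (replicate k (blk a x))"
  by (induction k) (auto simp: Gm_def)

lemma Gm_single[simp]: "Gm a [x] = blk a x"
  by (simp add: Gm_def)

lemma cf_rem_shift: "cf_rem (frac (1/\<alpha>)) n = cf_rem \<alpha> (Suc n)"
  by (induction n) simp_all

lemma cf_pq_shift: "cf_pq (frac (1/\<alpha>)) (Suc k) = cf_pq \<alpha> (Suc (Suc k))"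
  by (simp add: cf_pq_def cf_rem_shift)

lemma sw_G:
  assumes "0 < \<alpha>" "\<alpha> < 1" "\<alpha> \<notin> \<rat>"
  shows "sw \<alpha> (Suc (Suc n)) = Gm (cf_pq \<alpha> 1) (sw (frac (1/\<alpha>)) (Suc n))"
proof (induction n rule: less_induct)
  case (less n)
  define b where "b = frac (1/\<alpha>)"
  define a where "a = cf_pq \<alpha> 1"
  have "n = 0 \<or> n = Suc 0 \<or> (\<exists>k. n = Suc (Suc k))" by presburger
  then show ?case
  proof (elim disjE exE)
    assume "n = 0"
    then show ?thesis by (simp add: sw2 blk_def)
  next
    assume n: "n = Suc 0"
    have c1: "cf_pq b 1 = cf_pq \<alpha> 2" using cf_pq_shift[of \<alpha> 0] unfolding b_def
      by (simp add: numeral_2_eq_2)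
    have "cf_pq \<alpha> 2 \<ge> 1" using cf_pq_pos[OF assms, of 1] by (simp add: numeral_2_eq_2)
    then obtain c' where c': "cf_pq \<alpha> 2 = Suc c'" by (cases "cf_pq \<alpha> 2") auto
    have B: "sw \<alpha> (Suc (Suc 0)) = blk (cf_pq \<alpha> 1) 0" by (simp add: sw2 blk_def)
    have "Gm a (sw b (Suc (Suc 0))) = concat (replicate c' (blk a 0)) @ blk a 1"
      using c1 c' by (simp add: sw2 Gm_replicate)
    also have "\<dots> = concat (replicate c' (blk a 0)) @ blk a 0 @ [0]"
      by (simp add: blk_def)
    also have "\<dots> = concat (replicate c' (blk a 0) @ [blk a 0]) @ [0]" by simp
    also have "\<dots> = concat (replicate (cf_pq \<alpha> 2) (blk a 0)) @ [0]"
      using c' by (simp add: replicate_append_same)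
    finally have X: "Gm a (sw b (Suc (Suc 0))) = concat (replicate (cf_pq \<alpha> 2) (blk a 0)) @ [0]" .
    show ?thesis unfolding n sw3 B using X unfolding a_def b_def by (rule sym)
  next
    fix k assume n: "n = Suc (Suc k)"
    have IH1: "sw \<alpha> (Suc (Suc (Suc k))) = Gm a (sw b (Suc (Suc k)))"
      using less.IH[of "Suc k"] n unfolding a_def b_def by simp
    have IH2: "sw \<alpha> (Suc (Suc k)) = Gm a (sw b (Suc k))"
      using less.IH[of k] n unfolding a_def b_def by simp
    have e: "cf_pq b (k + 2) = cf_pq \<alpha> (Suc k + 2)"
    proof -
      have "k + 2 = Suc (Suc k)" "Suc k + 2 = Suc (Suc (Suc k))" by simp_all
      then show ?thesis using cf_pq_shift[of \<alpha> "Suc k"] unfolding b_def by simp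
    qed
    have "Gm a (sw b (Suc n)) = Gm a (sw b (Suc (Suc (Suc k))))" using n by simp
    also have "\<dots> = concat (replicate (cf_pq b (k + 2)) (Gm a (sw b (Suc (Suc k))))) @ Gm a (sw b (Suc k))"
      by (simp only: sw.simps(4) Gm_append Gm_concat_rep)
    also have "\<dots> = concat (replicate (cf_pq \<alpha> (Suc k + 2)) (sw \<alpha> (Suc (Suc (Suc k))))) @ sw \<alpha> (Suc (Suc k))"
      by (simp only: e IH1 IH2)
    also have "\<dots> = sw \<alpha> (Suc (Suc (Suc (Suc k))))"
      by (rule sw.simps(4)[symmetric])
    finally show ?thesis using n unfolding a_def b_def by simp
  qed
qed


definition cw :: "real \<Rightarrow> nat \<Rightarrow> nat" where
  "cw \<alpha> k = nat (\<lfloor>(real k + 2) * \<alpha>\<rfloor> - \<lfloor>(real k + 1) * \<alpha>\<rfloor>)"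

definition aa :: "real \<Rightarrow> nat" where "aa \<alpha> = nat \<lfloor>1 / \<alpha>\<rfloor>"
definition bb :: "real \<Rightarrow> real" where "bb \<alpha> = frac (1 / \<alpha>)"
definition Nn :: "real \<Rightarrow> nat \<Rightarrow> int" where "Nn \<alpha> m = \<lfloor>(real m + 1) / \<alpha>\<rfloor>"
definition PP :: "real \<Rightarrow> nat \<Rightarrow> nat" where
  "PP \<alpha> m = aa \<alpha> * m + nat \<lfloor>(real m + 1) * bb \<alpha>\<rfloor>"

lemma cw_int:
  assumes "0 \<le> \<beta>" "\<beta> < 1"
  shows "int (cw \<beta> m) = \<lfloor>(real m + 2) * \<beta>\<rfloor> - \<lfloor>(real m + 1) * \<beta>\<rfloor>"
    and "cw \<beta> m \<le> 1"
proof -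
  have e: "(real m + 2) * \<beta> = (real m + 1) * \<beta> + \<beta>" by (simp add: algebra_simps)
  have "\<lfloor>(real m + 1) * \<beta>\<rfloor> \<le> \<lfloor>(real m + 2) * \<beta>\<rfloor>"
    unfolding e using assms by (intro floor_mono) simp
  moreover have "\<lfloor>(real m + 2) * \<beta>\<rfloor> \<le> \<lfloor>(real m + 1) * \<beta>\<rfloor> + 1"
  proof -
    have "\<lfloor>(real m + 2) * \<beta>\<rfloor> \<le> \<lfloor>(real m + 1) * \<beta> + 1\<rfloor>"
      unfolding e using assms by (intro floor_mono) simp
    then show ?thesis by simp
  qed
  ultimately show "int (cw \<beta> m) = \<lfloor>(real m + 2) * \<beta>\<rfloor> - \<lfloor>(real m + 1) * \<beta>\<rfloor>"
    and "cw \<beta> m \<le> 1" unfolding cw_def by auto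
qed

context
  fixes \<alpha> :: real
  assumes irr: "0 < \<alpha>" "\<alpha> < 1" "\<alpha> \<notin> \<rat>"
begin

lemma aa_props: "real (aa \<alpha>) = of_int \<lfloor>1/\<alpha>\<rfloor>" "aa \<alpha> \<ge> 1" "1/\<alpha> = real (aa \<alpha>) + bb \<alpha>"
   "real (aa \<alpha>) * \<alpha> \<le> 1"
proof -
  have "1 / \<alpha> > 1" using irr by simp
  then have f: "\<lfloor>1/\<alpha>\<rfloor> \<ge> 1" by (simp add: le_floor_iff)
  then have "0 \<le> \<lfloor>1/\<alpha>\<rfloor>" by linarith
  then show a1: "real (aa \<alpha>) = of_int \<lfloor>1/\<alpha>\<rfloor>" unfolding aa_def by (rule of_nat_nat)
  show "aa \<alpha> \<ge> 1" using f unfolding aa_def by linarith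
  show b: "1/\<alpha> = real (aa \<alpha>) + bb \<alpha>" unfolding a1 bb_def frac_def by simp
  have "real (aa \<alpha>) \<le> 1/\<alpha>" unfolding a1 by simp
  then show "real (aa \<alpha>) * \<alpha> \<le> 1" using irr by (simp add: field_simps)
qed

lemma bb_props: "0 < bb \<alpha>" "bb \<alpha> < 1" "bb \<alpha> \<notin> \<rat>"
  using frac_irr[OF inv_irr[OF irr(3)]] unfolding bb_def by auto

lemma Nn_eq: "Nn \<alpha> m = int (aa \<alpha>) * (int m + 1) + \<lfloor>(real m + 1) * bb \<alpha>\<rfloor>"
proof -
  have "(real m + 1) / \<alpha> = (real m + 1) * (1 / \<alpha>)" by simp
  also have "\<dots> = of_int (int (aa \<alpha>) * (int m + 1)) + (real m + 1) * bb \<alpha>"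
    unfolding aa_props(3) by (simp add: algebra_simps)
  finally show ?thesis unfolding Nn_def by (simp only: floor_add_int[symmetric] add.commute)
qed

lemma notint: "(real m + 1) / \<alpha> \<notin> \<int>"
proof
  assume "(real m + 1) / \<alpha> \<in> \<int>"
  then have q: "(real m + 1) / \<alpha> \<in> \<rat>" using Ints_subset_Rats by blast
  have "\<alpha> = (real m + 1) / ((real m + 1) / \<alpha>)" using irr by simp
  also have "\<dots> \<in> \<rat>"
  proof -
    have "real m + 1 \<in> \<rat>" by (intro Rats_add) auto
    then show ?thesis by (rule Rats_divide[OF _ q])
  qed
  finally show False using irr by simp
qed

lemma Nn_bounds: "of_int (Nn \<alpha> m) < (real m + 1) / \<alpha>" "(real m + 1) / \<alpha> < of_int (Nn \<alpha> m) + 1"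
proof -
  have "of_int (Nn \<alpha> m) \<le> (real m + 1) / \<alpha>" unfolding Nn_def by simp
  moreover have "of_int (Nn \<alpha> m) \<noteq> (real m + 1) / \<alpha>" using notint[of m]
    by (metis Ints_of_int)
  ultimately show "of_int (Nn \<alpha> m) < (real m + 1) / \<alpha>" by simp
  show "(real m + 1) / \<alpha> < of_int (Nn \<alpha> m) + 1" unfolding Nn_def by simp
qed

lemma floor_mid:
  assumes "Nn \<alpha> m - int (aa \<alpha>) + 1 \<le> K" "K \<le> Nn \<alpha> m"
  shows "\<lfloor>of_int K * \<alpha>\<rfloor> = int m"
proof -
  have "of_int K \<le> (of_int (Nn \<alpha> m) :: real)" using assms(2) by simp
  then have "of_int K < (real m + 1) / \<alpha>" using Nn_bounds(1)[of m] by linarith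
  then have up: "of_int K * \<alpha> < real m + 1" using irr by (simp add: field_simps)
  have "of_int K \<ge> (of_int (Nn \<alpha> m) :: real) - real (aa \<alpha>) + 1" using assms(1) by linarith
  then have "of_int K > (real m + 1) / \<alpha> - real (aa \<alpha>)" using Nn_bounds(2)[of m] by linarith
  then have "of_int K * \<alpha> > ((real m + 1) / \<alpha> - real (aa \<alpha>)) * \<alpha>" using irr
    by (simp add: mult_strict_right_mono)
  also have "((real m + 1) / \<alpha> - real (aa \<alpha>)) * \<alpha> = real m + 1 - real (aa \<alpha>) * \<alpha>"
    using irr by (simp add: field_simps)
  finally have lo: "of_int K * \<alpha> > real m + 1 - real (aa \<alpha>) * \<alpha>" .
  show ?thesis using up lo aa_props(4) by (simp add: floor_eq_iff)
qed

lemma floor_next: "\<lfloor>(of_int (Nn \<alpha> m) + 1) * \<alpha>\<rfloor> = int m + 1"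
proof -
  have "(of_int (Nn \<alpha> m) + 1) > (real m + 1) / \<alpha>" using Nn_bounds(2)[of m] by simp
  then have lo: "(of_int (Nn \<alpha> m) + 1) * \<alpha> > real m + 1" using irr by (simp add: field_simps)
  have "(of_int (Nn \<alpha> m) + 1) < (real m + 1) / \<alpha> + 1" using Nn_bounds(1)[of m] by simp
  then have "(of_int (Nn \<alpha> m) + 1) * \<alpha> < ((real m + 1) / \<alpha> + 1) * \<alpha>" using irr
    by (simp add: mult_strict_right_mono)
  also have "\<dots> = real m + 1 + \<alpha>" using irr by (simp add: field_simps)
  finally have up: "(of_int (Nn \<alpha> m) + 1) * \<alpha> < real m + 2" using irr by simp
  show ?thesis using up lo by (simp add: floor_eq_iff)
qed

lemma PP_int: "int (PP \<alpha> m) = Nn \<alpha> m - int (aa \<alpha>)"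
proof -
  have "\<lfloor>(real m + 1) * bb \<alpha>\<rfloor> \<ge> 0" using bb_props by simp
  then have "int (PP \<alpha> m) = int (aa \<alpha>) * int m + \<lfloor>(real m + 1) * bb \<alpha>\<rfloor>"
    unfolding PP_def by simp
  moreover have "Nn \<alpha> m = int (aa \<alpha>) * int m + int (aa \<alpha>) + \<lfloor>(real m + 1) * bb \<alpha>\<rfloor>"
    using Nn_eq[of m] by (simp add: distrib_left)
  ultimately show ?thesis by linarith
qed

lemma Nn_Suc: "Nn \<alpha> (Suc m) = Nn \<alpha> m + int (aa \<alpha>) + int (cw (bb \<alpha>) m)"
proof -
  have "real (Suc m) + 1 = real m + 2" by simp
  then show ?thesis unfolding Nn_eq cw_int(1)[OF less_imp_le[OF bb_props(1)] bb_props(2)]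
    by (simp add: algebra_simps)
qed

lemma PP_Suc: "PP \<alpha> (Suc m) = PP \<alpha> m + aa \<alpha> + cw (bb \<alpha>) m"
proof -
  have "int (PP \<alpha> (Suc m)) = int (PP \<alpha> m + aa \<alpha> + cw (bb \<alpha>) m)"
    using PP_int[of m] PP_int[of "Suc m"] Nn_Suc[of m] by simp
  then show ?thesis by (simp only: of_nat_eq_iff)
qed

lemma PP_0: "PP \<alpha> 0 = 0"
  using bb_props unfolding PP_def by (simp add: floor_eq_iff)

lemma block1:
  assumes "i < aa \<alpha>"
  shows "cw \<alpha> (PP \<alpha> m + i) = (if i = aa \<alpha> - 1 then 1 else 0)"
proof -
  let ?N = "Nn \<alpha> m" and ?a = "int (aa \<alpha>)"
  have r: "real (PP \<alpha> m + i) = of_int (?N - ?a + int i)"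
  proof -
    have "int (PP \<alpha> m + i) = ?N - ?a + int i" using PP_int by simp
    then show ?thesis by (metis of_int_of_nat_eq)
  qed
  have f1: "\<lfloor>(real (PP \<alpha> m + i) + 1) * \<alpha>\<rfloor> = int m"
  proof -
    have "(real (PP \<alpha> m + i) + 1) = of_int (?N - ?a + int i + 1)" using r by simp
    moreover have "\<lfloor>of_int (?N - ?a + int i + 1) * \<alpha>\<rfloor> = int m"
      using assms by (intro floor_mid) auto
    ultimately show ?thesis by simp
  qed
  show ?thesis
  proof (cases "i = aa \<alpha> - 1")
    case True
    then have e2: "(real (PP \<alpha> m + i) + 2) = of_int ?N + 1" using r assms by simp
    have "\<lfloor>(real (PP \<alpha> m + i) + 2) * \<alpha>\<rfloor> = int m + 1" unfolding e2 by (rule floor_next)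
    then show ?thesis using f1 True unfolding cw_def by simp
  next
    case False
    have "(real (PP \<alpha> m + i) + 2) = of_int (?N - ?a + int i + 2)" using r by simp
    moreover have "\<lfloor>of_int (?N - ?a + int i + 2) * \<alpha>\<rfloor> = int m"
      using assms False by (intro floor_mid) auto
    ultimately have "\<lfloor>(real (PP \<alpha> m + i) + 2) * \<alpha>\<rfloor> = int m" by simp
    then show ?thesis using f1 False unfolding cw_def by simp
  qed
qed

lemma block2:
  assumes "cw (bb \<alpha>) m = 1"
  shows "cw \<alpha> (PP \<alpha> m + aa \<alpha>) = 0"
proof -
  let ?N = "Nn \<alpha> m" and ?a = "int (aa \<alpha>)"
  have r: "real (PP \<alpha> m + aa \<alpha>) = of_int ?N"
  proof -
    have "int (PP \<alpha> m + aa \<alpha>) = ?N" using PP_int by simp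
    then show ?thesis by (metis of_int_of_nat_eq)
  qed
  have f1: "\<lfloor>(real (PP \<alpha> m + aa \<alpha>) + 1) * \<alpha>\<rfloor> = int m + 1" using r floor_next by simp
  have NS: "Nn \<alpha> (Suc m) = ?N + ?a + 1" using Nn_Suc assms by simp
  have "\<lfloor>of_int (?N + 2) * \<alpha>\<rfloor> = int (Suc m)"
    using NS aa_props(2) by (intro floor_mid) auto
  then have f2: "\<lfloor>(real (PP \<alpha> m + aa \<alpha>) + 2) * \<alpha>\<rfloor> = int m + 1" using r by simp
  show ?thesis using f1 f2 unfolding cw_def by simp
qed

end


lemma blk_len: "x \<le> 1 \<Longrightarrow> a \<ge> 1 \<Longrightarrow> length (blk a x) = a + x"
  unfolding blk_def by (cases x) auto

lemma blk_nth: "a \<ge> 1 \<Longrightarrow> i < a \<Longrightarrow> blk a x ! i = (if i = a - 1 then 1 else 0)"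
  unfolding blk_def by (auto simp: nth_append)

lemma blk_nth2: "a \<ge> 1 \<Longrightarrow> x \<noteq> 0 \<Longrightarrow> blk a x ! a = 0"
  unfolding blk_def by (auto simp: nth_append)

lemma map_G:
  assumes irr: "0 < \<alpha>" "\<alpha> < 1" "\<alpha> \<notin> \<rat>"
  shows "Gm (aa \<alpha>) (map (cw (bb \<alpha>)) [0..<m]) = map (cw \<alpha>) [0..<PP \<alpha> m]"
proof (induction m)
  case 0
  then show ?case using PP_0[OF irr] by (simp add: Gm_def)
next
  case (Suc m)
  define x where "x = cw (bb \<alpha>) m"
  define L where "L = aa \<alpha> + x"
  have a1: "aa \<alpha> \<ge> 1" using aa_props[OF irr] by simp
  have x1: "x \<le> 1" unfolding x_def using bb_props[OF irr] cw_int(2) by simp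
  have split: "map (cw \<alpha>) [0..<PP \<alpha> (Suc m)] = map (cw \<alpha>) [0..<PP \<alpha> m] @ map (cw \<alpha>) [PP \<alpha> m..<PP \<alpha> m + L]"
    unfolding PP_Suc[OF irr] L_def x_def
    using upt_add_eq_append[of 0 "PP \<alpha> m" "aa \<alpha> + cw (bb \<alpha>) m"] by (simp add: add.assoc)
  have blkeq: "blk (aa \<alpha>) x = map (cw \<alpha>) [PP \<alpha> m..<PP \<alpha> m + L]"
  proof (rule nth_equalityI)
    show "length (blk (aa \<alpha>) x) = length (map (cw \<alpha>) [PP \<alpha> m..<PP \<alpha> m + L])"
      using blk_len[OF x1 a1] L_def by simp
    fix i assume "i < length (blk (aa \<alpha>) x)"
    then have i: "i < L" using blk_len[OF x1 a1] L_def by simp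
    have r: "map (cw \<alpha>) [PP \<alpha> m..<PP \<alpha> m + L] ! i = cw \<alpha> (PP \<alpha> m + i)" using i by simp
    show "blk (aa \<alpha>) x ! i = map (cw \<alpha>) [PP \<alpha> m..<PP \<alpha> m + L] ! i"
    proof (cases "i < aa \<alpha>")
      case True
      then show ?thesis unfolding r using blk_nth[OF a1 True] block1[OF irr True] by simp
    next
      case False
      then have ia: "i = aa \<alpha>" "x = 1" using i x1 L_def by auto
      then show ?thesis unfolding r using blk_nth2[OF a1, of x] block2[OF irr, of m] x_def by simp
    qed
  qed
  have "Gm (aa \<alpha>) (map (cw (bb \<alpha>)) [0..<Suc m]) = Gm (aa \<alpha>) (map (cw (bb \<alpha>)) [0..<m]) @ blk (aa \<alpha>) x"
    unfolding x_def by simp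
  also have "\<dots> = map (cw \<alpha>) [0..<PP \<alpha> (Suc m)]" unfolding Suc.IH blkeq split ..
  finally show ?case .
qed

lemma sw_prefix:
  assumes "0 < \<alpha>" "\<alpha> < 1" "\<alpha> \<notin> \<rat>"
  shows "sw \<alpha> (Suc (Suc n)) = map (cw \<alpha>) [0..<length (sw \<alpha> (Suc (Suc n)))]"
  using assms
proof (induction n arbitrary: \<alpha>)
  case 0
  note irr = "0.prems"
  have a1: "aa \<alpha> \<ge> 1" using aa_props[OF irr] by simp
  have c1: "cf_pq \<alpha> 1 = aa \<alpha>" by (simp add: cf_pq_def aa_def)
  have s2: "sw \<alpha> (Suc (Suc 0)) = blk (aa \<alpha>) 0" using c1 by (simp add: sw2 blk_def)
  have "blk (aa \<alpha>) 0 = map (cw \<alpha>) [0..<aa \<alpha>]"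
  proof (rule nth_equalityI)
    show "length (blk (aa \<alpha>) 0) = length (map (cw \<alpha>) [0..<aa \<alpha>])"
      using blk_len[of 0, OF _ a1] by simp
    fix i assume "i < length (blk (aa \<alpha>) 0)"
    then have i: "i < aa \<alpha>" using blk_len[of 0, OF _ a1] by simp
    then show "blk (aa \<alpha>) 0 ! i = map (cw \<alpha>) [0..<aa \<alpha>] ! i"
      using blk_nth[OF a1 i] block1[OF irr i, of 0] PP_0[OF irr] by simp
  qed
  then show ?case unfolding s2 by simp
next
  case (Suc n)
  note irr = Suc.prems
  have c1: "cf_pq \<alpha> 1 = aa \<alpha>" by (simp add: cf_pq_def aa_def)
  have IH: "sw (bb \<alpha>) (Suc (Suc n)) = map (cw (bb \<alpha>)) [0..<length (sw (bb \<alpha>) (Suc (Suc n)))]"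
    using Suc.IH[of "bb \<alpha>"] bb_props[OF irr] by simp
  have "sw \<alpha> (Suc (Suc (Suc n))) = Gm (aa \<alpha>) (sw (bb \<alpha>) (Suc (Suc n)))"
    using sw_G[OF irr, of "Suc n"] c1 unfolding bb_def by simp
  also have "\<dots> = map (cw \<alpha>) [0..<PP \<alpha> (length (sw (bb \<alpha>) (Suc (Suc n))))]"
    by (subst IH) (rule map_G[OF irr])
  finally have X: "sw \<alpha> (Suc (Suc (Suc n))) = map (cw \<alpha>) [0..<PP \<alpha> (length (sw (bb \<alpha>) (Suc (Suc n))))]" .
  then show ?case by (metis length_map length_upt minus_nat.diff_0)
qed


definition ind :: "real \<Rightarrow> real \<Rightarrow> nat" where
  "ind \<alpha> y = (if frac y \<in> {1 - \<alpha>..<1} then 1 else 0)"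

lemma frac_frac_add: "frac (frac x + z) = frac (x + z)"
proof -
  have "frac x + z = (x + z) + of_int (- \<lfloor>x\<rfloor>)" by (simp add: frac_def)
  then show ?thesis by (simp only: frac_add_of_int_right)
qed

lemma ind_frac: "ind \<alpha> (frac x + z) = ind \<alpha> (x + z)"
  unfolding ind_def frac_frac_add ..

lemma step_ind:
  assumes "0 < \<alpha>" "\<alpha> < 1"
  shows "\<lfloor>y + \<alpha>\<rfloor> - \<lfloor>y\<rfloor> = int (ind \<alpha> y)"
proof -
  have e: "y + \<alpha> = (frac y + \<alpha>) + of_int \<lfloor>y\<rfloor>" by (simp add: frac_def)
  have fl: "\<lfloor>y + \<alpha>\<rfloor> = \<lfloor>frac y + \<alpha>\<rfloor> + \<lfloor>y\<rfloor>" unfolding e by (simp only: floor_add_int)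
  have f: "0 \<le> frac y" "frac y < 1" by (simp_all add: frac_lt_1)
  show ?thesis
  proof (cases "frac y \<ge> 1 - \<alpha>")
    case True
    then have "\<lfloor>frac y + \<alpha>\<rfloor> = 1" using f assms by (simp add: floor_eq_iff)
    then show ?thesis using fl True f unfolding ind_def by simp
  next
    case False
    then have "\<lfloor>frac y + \<alpha>\<rfloor> = 0" using f assms by (simp add: floor_eq_iff)
    then show ?thesis using fl False f unfolding ind_def by simp
  qed
qed

lemma cw_ind:
  assumes "0 < \<alpha>" "\<alpha> < 1"
  shows "cw \<alpha> k = ind \<alpha> (real k * \<alpha> + \<alpha>)"
proof -
  have e1: "(real k + 2) * \<alpha> = (real k * \<alpha> + \<alpha>) + \<alpha>" by (simp add: algebra_simps)
  have e2: "(real k + 1) * \<alpha> = real k * \<alpha> + \<alpha>" by (simp add: algebra_simps)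
  show ?thesis unfolding cw_def e1 e2 step_ind[OF assms] by simp
qed

lemma sturm_ind: "sturm \<alpha> \<theta> n = ind \<alpha> (of_int n * \<alpha> + \<theta>)"
  unfolding sturm_def ind_def ..

definition rcP :: "real \<Rightarrow> real \<Rightarrow> nat \<Rightarrow> real \<Rightarrow> bool" where
  "rcP \<alpha> \<rho> L e \<longleftrightarrow> (\<forall>\<sigma>. \<rho> \<le> \<sigma> \<and> \<sigma> < \<rho> + e \<longrightarrow>
     (\<forall>i<L. ind \<alpha> (\<sigma> + real i * \<alpha>) = ind \<alpha> (\<rho> + real i * \<alpha>)))"

lemma rc_one:
  assumes "0 < \<alpha>" "\<alpha> < 1"
  shows "\<exists>e>0. \<forall>\<sigma>. \<rho> \<le> \<sigma> \<and> \<sigma> < \<rho> + e \<longrightarrow> ind \<alpha> (\<sigma> + z) = ind \<alpha> (\<rho> + z)"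
proof -
  define f where "f = frac (\<rho> + z)"
  have f: "0 \<le> f" "f < 1" unfolding f_def by (simp_all add: frac_lt_1)
  define e where "e = (if f \<ge> 1 - \<alpha> then 1 - f else 1 - \<alpha> - f)"
  have e0: "e > 0" unfolding e_def using f by auto
  have "ind \<alpha> (\<sigma> + z) = ind \<alpha> (\<rho> + z)" if s: "\<rho> \<le> \<sigma>" "\<sigma> < \<rho> + e" for \<sigma>
  proof -
    define d where "d = \<sigma> - \<rho>"
    have d: "0 \<le> d" "d < e" using s unfolding d_def by auto
    have "e \<le> 1 - f" unfolding e_def using assms by auto
    then have fd: "f + d < 1" using d by simp
    have fr: "frac (\<sigma> + z) = f + d"
    proof -
      have "(\<sigma> + z) - (f + d) = of_int \<lfloor>\<rho> + z\<rfloor>" unfolding f_def d_def frac_def by simp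
      then have "(\<sigma> + z) - (f + d) \<in> \<int>" by simp
      then show ?thesis using fd d f by (simp add: frac_unique_iff)
    qed
    show ?thesis
    proof (cases "f \<ge> 1 - \<alpha>")
      case True
      then show ?thesis unfolding ind_def fr f_def[symmetric] using fd d by simp
    next
      case False
      then have "d < 1 - \<alpha> - f" using d unfolding e_def by simp
      then show ?thesis unfolding ind_def fr f_def[symmetric] using False by simp
    qed
  qed
  then show ?thesis using e0 by blast
qed

lemma rc_all:
  assumes "0 < \<alpha>" "\<alpha> < 1"
  shows "\<exists>e>0. rcP \<alpha> \<rho> L e"
proof (induction L)
  case 0
  show ?case by (intro exI[of _ 1]) (simp add: rcP_def)
next
  case (Suc L)
  from Suc.IH obtain e1 where e1: "e1 > 0" "rcP \<alpha> \<rho> L e1" by blast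
  from rc_one[OF assms, of \<rho> "real L * \<alpha>"] obtain e2 where e2: "e2 > 0" and
     e2': "\<And>\<sigma>. \<rho> \<le> \<sigma> \<Longrightarrow> \<sigma> < \<rho> + e2 \<Longrightarrow>
     ind \<alpha> (\<sigma> + real L * \<alpha>) = ind \<alpha> (\<rho> + real L * \<alpha>)" by auto
  have "rcP \<alpha> \<rho> (Suc L) (min e1 e2)"
    unfolding rcP_def
  proof (intro allI impI)
    fix \<sigma> i assume s: "\<rho> \<le> \<sigma> \<and> \<sigma> < \<rho> + min e1 e2" and i: "i < Suc L"
    show "ind \<alpha> (\<sigma> + real i * \<alpha>) = ind \<alpha> (\<rho> + real i * \<alpha>)"
    proof (cases "i < L")
      case True
      have "\<sigma> < \<rho> + e1" using s min.cobounded1[of e1 e2] by linarith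
      then have "\<forall>i<L. ind \<alpha> (\<sigma> + real i * \<alpha>) = ind \<alpha> (\<rho> + real i * \<alpha>)"
        using e1(2) s unfolding rcP_def by blast
      then show ?thesis using True by blast
    next
      case False
      then have "i = L" using i by simp
      moreover have "\<sigma> < \<rho> + e2" using s min.cobounded2[of e1 e2] by linarith
      ultimately show ?thesis using e2'[of \<sigma>] s by simp
    qed
  qed
  then show ?case using e1 e2 by (intro exI[of _ "min e1 e2"]) simp
qed

lemma density:
  assumes "\<alpha> \<notin> \<rat>" "0 \<le> \<rho>" "\<rho> < 1" "e > 0"
  shows "\<exists>k>0. \<rho> \<le> frac (real k * \<alpha>) \<and> frac (real k * \<alpha>) < \<rho> + e"
proof -
  define e' where "e' = min e (1 - \<rho>)"
  have e': "e' > 0" "e' \<le> e" "e' \<le> 1 - \<rho>" unfolding e'_def using assms by auto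
  obtain k where k: "k > 0" "\<bar>frac (real k * \<alpha>) - (\<rho> + e' / 2)\<bar> < e' / 2"
    using Kronecker_approx_1_explicit[OF assms(1), of "\<rho> + e' / 2" "e' / 2"] e' assms by auto
  then have "frac (real k * \<alpha>) - (\<rho> + e' / 2) < e' / 2 \<and> - (frac (real k * \<alpha>) - (\<rho> + e' / 2)) < e' / 2"
    unfolding abs_less_iff by blast
  then have "\<rho> \<le> frac (real k * \<alpha>) \<and> frac (real k * \<alpha>) < \<rho> + e" using e' by linarith
  then show ?thesis using k(1) by blast
qed

lemma wset_cw:
  assumes "0 < \<alpha>" "\<alpha> < 1" "\<alpha> \<notin> \<rat>" "w \<in> Wset \<alpha>"
  shows "\<exists>k. w = map (\<lambda>i. cw \<alpha> (k + i)) [0..<length w]"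
proof -
  from assms(4) obtain \<theta> m where w: "w = map (\<lambda>i. sturm \<alpha> \<theta> (m + int i)) [0..<length w]"
    unfolding Wset_def by blast
  define \<rho> where "\<rho> = frac (of_int m * \<alpha> + \<theta>)"
  have r: "0 \<le> \<rho>" "\<rho> < 1" unfolding \<rho>_def by (simp_all add: frac_lt_1)
  have s: "sturm \<alpha> \<theta> (m + int i) = ind \<alpha> (\<rho> + real i * \<alpha>)" for i
  proof -
    have eq: "of_int (m + int i) * \<alpha> + \<theta> = (of_int m * \<alpha> + \<theta>) + real i * \<alpha>"
      by (simp add: algebra_simps)
    show ?thesis unfolding sturm_ind \<rho>_def ind_frac eq by (rule refl)
  qed
  obtain e where e: "e > 0" "rcP \<alpha> \<rho> (length w) e"
    using rc_all[OF assms(1,2)] by blast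
  obtain k where k: "k > 0" "\<rho> \<le> frac (real k * \<alpha>)" "frac (real k * \<alpha>) < \<rho> + e"
    using density[OF assms(3) r e(1)] by blast
  have c: "cw \<alpha> (k - 1 + i) = sturm \<alpha> \<theta> (m + int i)" if "i < length w" for i
  proof -
    have "cw \<alpha> (k - 1 + i) = ind \<alpha> (real (k - 1 + i) * \<alpha> + \<alpha>)" by (rule cw_ind[OF assms(1,2)])
    also have "real (k - 1 + i) * \<alpha> + \<alpha> = real k * \<alpha> + real i * \<alpha>"
      using k(1) by (simp add: algebra_simps of_nat_diff)
    also have "ind \<alpha> (real k * \<alpha> + real i * \<alpha>) = ind \<alpha> (frac (real k * \<alpha>) + real i * \<alpha>)"
      by (rule ind_frac[symmetric])
    also have "\<dots> = ind \<alpha> (\<rho> + real i * \<alpha>)"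
    proof -
      have "\<forall>i<length w. ind \<alpha> (frac (real k * \<alpha>) + real i * \<alpha>) = ind \<alpha> (\<rho> + real i * \<alpha>)"
        using e(2) k(2,3) unfolding rcP_def by blast
      then show ?thesis using that by blast
    qed
    finally show ?thesis using s by simp
  qed
  have "w = map (\<lambda>i. cw \<alpha> (k - 1 + i)) [0..<length w]"
    by (subst w) (rule map_cong; use c in auto)
  then show ?thesis by blast
qed

lemma sw_len:
  assumes "0 < \<alpha>" "\<alpha> < 1" "\<alpha> \<notin> \<rat>"
  shows "length (sw \<alpha> (Suc (Suc n))) \<ge> Suc n"
proof (induction n)
  case 0
  then show ?case by (simp add: sw2)
next
  case (Suc n)
  obtain c where c: "cf_pq \<alpha> (n + 2) = Suc c" using cf_pq_pos[OF assms, of "Suc n"]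
    by (cases "cf_pq \<alpha> (n + 2)") auto
  have "sw \<alpha> (Suc (Suc (Suc n))) = sw \<alpha> (Suc (Suc n)) @ concat (replicate c (sw \<alpha> (Suc (Suc n)))) @ sw \<alpha> (Suc n)"
    by (simp only: sw.simps(4) c) simp
  moreover have "sw \<alpha> (Suc n) \<noteq> []" by (rule sw_nonempty)
  ultimately have "length (sw \<alpha> (Suc (Suc (Suc n)))) \<ge> length (sw \<alpha> (Suc (Suc n))) + 1"
    by (cases "sw \<alpha> (Suc n)") auto
  then show ?case using Suc.IH by simp
qed

lemma upt_split: "i \<le> j \<Longrightarrow> j \<le> k \<Longrightarrow> [i..<k] = [i..<j] @ [j..<k]"
  using upt_add_eq_append[of i j "k - j"] by simp

lemma final:
  assumes "0 < \<alpha>" "\<alpha> < 1" "\<alpha> \<notin> \<rat>" "w \<in> Wset \<alpha>"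
  shows "good \<alpha> w"
proof -
  have wne: "w \<noteq> []" using assms(4) unfolding Wset_def by blast
  obtain k where k: "w = map (\<lambda>i. cw \<alpha> (k + i)) [0..<length w]"
    using wset_cw[OF assms] by blast
  define L where "L = length w"
  define K where "K = k + L"
  define S where "S = sw \<alpha> (Suc (Suc K))"
  define n where "n = length S"
  have lenS: "n \<ge> K" using sw_len[OF assms(1-3), of K] unfolding n_def S_def by simp
  have S: "S = map (cw \<alpha>) [0..<n]" unfolding S_def n_def by (rule sw_prefix[OF assms(1-3)])
  have u1: "[0..<n] = [0..<k] @ [k..<n]" using lenS unfolding K_def by (intro upt_split) auto
  have u2: "[k..<n] = [k..<k + L] @ [k + L..<n]" using lenS unfolding K_def by (intro upt_split) auto
  have "[0..<n] = [0..<k] @ [k..<k + L] @ [k + L..<n]" unfolding u1 u2 ..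
  then have "S = map (cw \<alpha>) [0..<k] @ map (cw \<alpha>) [k..<k + L] @ map (cw \<alpha>) [k + L..<n]"
    using S by simp
  moreover have "map (cw \<alpha>) [k..<k + L] = w"
  proof -
    have "[k..<k + L] = map (\<lambda>i. k + i) [0..<L]" by (simp add: map_add_upt add.commute)
    then have "map (cw \<alpha>) [k..<k + L] = map (\<lambda>i. cw \<alpha> (k + i)) [0..<L]" by (simp add: comp_def)
    also have "\<dots> = w" unfolding L_def using k by (rule sym)
    finally show ?thesis .
  qed
  ultimately have "sublist w S" unfolding sublist_def by metis
  then show ?thesis unfolding S_def using main_comb[OF assms(1-3) wne] by blast
qed


theorem lemma2:
  fixes \<alpha> :: real and w :: "nat list"
  assumes "0 < \<alpha>" and "\<alpha> < 1" and "\<alpha> \<notin> \<rat>" and "w \<in> Wset \<alpha>"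
  shows "\<exists>t::nat. t \<ge> 1 \<and> (\<exists>x y. (suffix x (sw \<alpha> (t + 1)) \<or> suffix x (sw \<alpha> t))
           \<and> prefix y (sw \<alpha> (t + 2)) \<and> w = x @ y)"
  using final[OF assms] unfolding good_def .

end
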